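(* Let $A$ satisfy the spectral assumption, with $R_1,R_2,N_1,N_2$ as below, and let $\gamma>0$, $\varepsilon_2,\varepsilon_3>0$. If $x\in\mathbb{R}^n$ satisfies $\|R_1x\|/\|R_2x\|>\gamma$, then for every $\omega\in\mathbb{N}$ $$\frac{\|R_1A^\omega x\|}{\|R_2A^\omega x\|}>\gamma_\omega:=C_\gamma\left(\frac{|\lambda_k|}{(1+\varepsilon_3|\lambda_k|)(|\lambda_{k+1}|+\varepsilon_2)}\right)^{\omega},\qquad C_\gamma:=\frac{1}{(1+\frac1\gamma)\,\zeta_{\varepsilon_3}(N_1^{-1})\,\zeta_{\varepsilon_2}(N_2)\,\|R_2\|}.$$ Consequently, if $\varepsilon_2,\varepsilon_3$ are such that the base of the power exceeds $1$, then for every $\gamma_+>0$ there is $\omega_0=O(\log(\gamma_+/\gamma))$ such that the ratio exceeds $\gamma_+$ for all $\omega>\omega_0$.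
   Context: Spectral assumption: $A\in\mathbb{R}^{n\times n}$ diagonalizable with eigenvalues $|\lambda_1|>\cdots\ge|\lambda_k|>1>|\lambda_{k+1}|\ge\cdots\ge|\lambda_n|$. $Q_1,Q_2$ have orthonormal columns spanning the unstable subspace $E_{\mathrm u}$ (eigenvectors of $\lambda_1..\lambda_k$) and stable subspace $E_{\mathrm s}$ (eigenvectors of $\lambda_{k+1}..\lambda_n$), $Q=[Q_1\ Q_2]$, $Q^{-1}=\begin{bmatrix}R_1\\R_2\end{bmatrix}$, and $Q^{-1}AQ=\mathrm{diag}(N_1,N_2)$ ($N_1$ invertible, $\rho(N_1^{-1})=1/|\lambda_k|$, $\rho(N_2)=|\lambda_{k+1}|$). For square $X$ and $\varepsilon>0$, $\zeta_\varepsilon(X):=\sup_{t\ge0}\|X^t\|/(\rho(X)+\varepsilon)^t$. Norms are spectral/Euclidean. *)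

theory Defs
  imports "HOL-Analysis.Analysis" "HOL-Library.Landau_Symbols"
begin

definition matpow :: "real^'n^'n \<Rightarrow> nat \<Rightarrow> real^'n^'n" where
  "matpow X t = (((**) X) ^^ t) (mat 1)"

definition cmat :: "real^'n^'m \<Rightarrow> complex^'n^'m" where
  "cmat X = (\<chi> i j. complex_of_real (X $ i $ j))"

definition cvec :: "real^'n \<Rightarrow> complex^'n" where
  "cvec x = (\<chi> i. complex_of_real (x $ i))"

definition is_eigenvalue :: "real^'n^'n \<Rightarrow> complex \<Rightarrow> bool" where
  "is_eigenvalue X \<mu> \<longleftrightarrow> (\<exists>v::complex^'n. v \<noteq> 0 \<and> cmat X *v v = \<mu> *s v)"

definition spec_radius :: "real^'n^'n \<Rightarrow> real" where
  "spec_radius X = Max {cmod \<mu> | \<mu>. is_eigenvalue X \<mu>}"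

definition snorm :: "real^'n^'m \<Rightarrow> real" where
  "snorm X = onorm (\<lambda>v. X *v v)"

definition zeta :: "real \<Rightarrow> real^'n^'n \<Rightarrow> real" where
  "zeta \<epsilon> X = (SUP t::nat. snorm (matpow X t) / (spec_radius X + \<epsilon>) ^ t)"

end

theory Submission
  imports Defs
begin


lemma cmat_mult: "cmat (X ** Y) = cmat X ** cmat Y"
  by (simp add: cmat_def matrix_matrix_mult_def vec_eq_iff)

lemma cmat_mv: "cmat X *v cvec y = cvec (X *v y)"
  by (simp add: cmat_def cvec_def matrix_vector_mult_def vec_eq_iff)

lemma cmat_add: "cmat (X + Y) = cmat X + cmat Y"
  by (simp add: cmat_def vec_eq_iff)

lemma cmat_one: "cmat (mat 1) = mat 1"
  by (simp add: cmat_def mat_def vec_eq_iff)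

lemma cmat_zero: "cmat 0 = 0"
  by (simp add: cmat_def vec_eq_iff)

lemma norm_cvec: "norm (cvec y) = norm y"
  by (simp add: cvec_def norm_vec_def)

lemma cvec_add: "cvec (x + y) = cvec x + cvec y"
  by (simp add: cvec_def vec_eq_iff)

lemma cvec_eq0: "cvec y = 0 \<longleftrightarrow> y = 0"
  by (simp add: cvec_def vec_eq_iff)

definition rvec :: "complex^'n \<Rightarrow> real^'n" where "rvec w = (\<chi> j. Re (w$j))"
definition imv :: "complex^'n \<Rightarrow> real^'n" where "imv w = (\<chi> j. Im (w$j))"

lemma re_im_split: "w = cvec (rvec w) + \<i> *s cvec (imv w)"
  by (simp add: vec_eq_iff cvec_def rvec_def imv_def complex_eq_iff)

lemma matpow_Suc: "matpow X (Suc t) = X ** matpow X t"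
  by (simp add: matpow_def)

lemma matpow_0: "matpow X 0 = mat 1"
  by (simp add: matpow_def)

lemma matpow_Suc': "matpow X (Suc t) = matpow X t ** X"
proof (induction t)
  case 0 then show ?case by (simp add: matpow_Suc matpow_0)
next
  case (Suc t)
  have "matpow X (Suc (Suc t)) = X ** (matpow X t ** X)" using Suc by (simp add: matpow_Suc)
  also have "\<dots> = matpow X (Suc t) ** X" by (simp add: matpow_Suc matrix_mul_assoc)
  finally show ?case .
qed

lemma matpow_mv: "matpow X t *v y = ((*v) X ^^ t) y"
  by (induction t) (simp_all add: matpow_0 matpow_Suc matrix_vector_mul_assoc[symmetric])

lemma matpow_comm: 
  assumes "A ** Q = Q ** N" shows "matpow A t ** Q = Q ** matpow N t"
proof (induction t)
  case 0 then show ?case by (simp add: matpow_0)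
next
  case (Suc t)
  have "matpow A (Suc t) ** Q = A ** (matpow A t ** Q)" by (simp add: matpow_Suc matrix_mul_assoc)
  also have "\<dots> = (A ** Q) ** matpow N t" using Suc by (simp add: matrix_mul_assoc)
  also have "\<dots> = Q ** matpow N (Suc t)" using assms by (simp add: matpow_Suc matrix_mul_assoc)
  finally show ?case .
qed

lemma matpow_comm2: 
  assumes "R ** A = N ** R" shows "R ** matpow A t = matpow N t ** R"
proof (induction t)
  case 0 then show ?case by (simp add: matpow_0)
next
  case (Suc t)
  have "R ** matpow A (Suc t) = (R ** matpow A t) ** A" by (simp add: matpow_Suc' matrix_mul_assoc)
  also have "\<dots> = matpow N t ** (R ** A)" using Suc by (simp add: matrix_mul_assoc)
  also have "\<dots> = matpow N (Suc t) ** R" using assms by (simp add: matpow_Suc' matrix_mul_assoc)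
  finally show ?case .
qed

lemma matpow_inv:
  assumes "X ** Y = mat 1" shows "matpow X t ** matpow Y t = mat 1"
proof (induction t)
  case 0 then show ?case by (simp add: matpow_0)
next
  case (Suc t)
  have "matpow X (Suc t) ** matpow Y (Suc t) = (matpow X t ** X) ** (Y ** matpow Y t)"
    by (simp only: matpow_Suc'[of X t] matpow_Suc[of Y t])
  also have "\<dots> = matpow X t ** ((X ** Y) ** matpow Y t)"
    by (simp only: matrix_mul_assoc)
  also have "\<dots> = mat 1" using Suc assms by simp
  finally show ?case .
qed

lemma isometry:
  fixes Q :: "real^'k^'n"
  assumes "transpose Q ** Q = mat 1"
  shows "norm (Q *v y) = norm y"
proof -
  have "(Q *v y) \<bullet> (Q *v y) = ((Q *v y) v* Q) \<bullet> y" by (rule dot_lmul_matrix[symmetric])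
  also have "(Q *v y) v* Q = (transpose Q ** Q) *v y"
    by (simp only: matrix_vector_mul_assoc[symmetric] transpose_matrix_vector)
  also have "\<dots> = y" using assms by simp
  finally show ?thesis by (simp add: norm_eq_sqrt_inner)
qed

lemma matrix_add_rdistrib': "(A + B) ** C = A ** C + B ** C"
  by (vector matrix_matrix_mult_def sum.distrib[symmetric] distrib_right)

lemma norm_smult_c: "norm (c *s (x::complex^'n)) = cmod c * norm x"
  by (simp add: norm_vec_def norm_mult L2_set_right_distrib)

lemma snorm_bound: "norm (X *v y) \<le> snorm X * norm (y::real^'n)"
  unfolding snorm_def by (rule onorm) simp

lemma snorm_le: "(\<And>y. norm (X *v y) \<le> b * norm (y::real^'n)) \<Longrightarrow> snorm X \<le> b"
  unfolding snorm_def by (rule onorm_le)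

lemma snorm_one: "snorm (mat 1 :: real^'n^'n) = 1"
proof -
  have e: "(*v) (mat 1 :: real^'n^'n) = (\<lambda>x. x)" by (rule ext) simp
  show ?thesis unfolding snorm_def e by (rule onorm_id)
qed

lemma cmat_scal: "cmat X *v (c *s w) = c *s (cmat X *v w)"
  by (rule vector_scalar_commute)

lemma mv_sum: "finite J \<Longrightarrow> M *v (\<Sum>i\<in>J. f i) = (\<Sum>i\<in>J. M *v f i)"
  by (induction J rule: finite_induct) (simp_all add: matrix_vector_right_distrib)



lemma zeta_bound:
  fixes X :: "real^'n^'n"
  assumes pos: "0 < spec_radius X + e"
    and bnd: "\<And>t. snorm (matpow X t) \<le> K * (spec_radius X + e) ^ t"
  shows "snorm (matpow X t) \<le> zeta e X * (spec_radius X + e) ^ t" and "1 \<le> zeta e X"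
proof -
  let ?f = "\<lambda>t. snorm (matpow X t) / (spec_radius X + e) ^ t"
  have bdd: "bdd_above (range ?f)"
  proof (rule bdd_aboveI2)
    fix t show "?f t \<le> K" using bnd[of t] pos by (simp add: pos_divide_le_eq)
  qed
  have "?f t \<le> zeta e X" unfolding zeta_def by (rule cSUP_upper[OF UNIV_I bdd])
  then show "snorm (matpow X t) \<le> zeta e X * (spec_radius X + e) ^ t"
    using pos by (simp add: pos_divide_le_eq)
  have "?f 0 \<le> zeta e X" unfolding zeta_def by (rule cSUP_upper[OF UNIV_I bdd])
  then show "1 \<le> zeta e X" by (simp add: matpow_0 snorm_one)
qed

lemma arith_main:
  fixes L P Rn nq z3 z2 s D E B g :: real
  assumes z3: "0 < z3" and z2: "0 < z2" and s: "1 \<le> s" and D: "0 < D" and E: "0 < E" and g: "0 < g"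
    and BDE: "B * D * E = 1"
    and hP: "P \<le> z3 * D * L" and hR: "Rn \<le> z2 * E * nq" and hx: "P > g * nq"
    and nq: "0 \<le> nq"
  shows "L > (1 / ((1 + 1/g) * z3 * z2 * s) * B) * Rn"
proof -
  have B: "0 < B" using BDE D E by (metis mult_pos_pos zero_less_mult_pos2 zero_less_one)
  have cpos: "0 < (1 + 1/g) * z3 * z2 * s" using z3 z2 s g by (simp add: add_pos_pos)
  have c0: "0 \<le> 1 / ((1 + 1/g) * z3 * z2 * s) * B" using cpos B by simp
  have "(1 / ((1 + 1/g) * z3 * z2 * s) * B) * Rn \<le> (1 / ((1 + 1/g) * z3 * z2 * s) * B) * (z2 * E * nq)"
    by (rule mult_left_mono[OF hR c0])
  also have "\<dots> = nq / ((1 + 1/g) * s) / (z3 * D)"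
  proof -
    have Beq: "B = 1 / (D * E)" using BDE D E by (simp add: field_simps)
    define c0 where "c0 = (1 + 1/g) * s"
    have c0: "0 < c0" unfolding c0_def using g s by (simp add: add_pos_pos)
    have d: "(1 + 1/g) * z3 * z2 * s = c0 * z3 * z2" unfolding c0_def by (simp add: mult_ac)
    have "(1 / (c0 * z3 * z2) * B) * (z2 * E * nq) = nq / c0 / (z3 * D)"
      unfolding Beq using c0 z2 z3 D E by (simp add: field_simps)
    then show ?thesis unfolding d c0_def .
  qed
  also have "\<dots> \<le> (g * nq) / (z3 * D)"
  proof (rule divide_right_mono)
    have X1: "1 \<le> (g + 1) * s" using g s mult_mono[of 1 "g+1" 1 s] by simp
    have e: "(1 + 1/g) * s = ((g + 1) * s) / g" using g by (simp add: field_simps)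
    have "nq / ((1 + 1/g) * s) = g * nq / ((g + 1) * s)" unfolding e using g by simp
    also have "\<dots> \<le> g * nq / 1"
      by (rule divide_left_mono[OF X1]) (use g nq X1 in auto)
    finally show "nq / ((1 + 1/g) * s) \<le> g * nq" by simp
    show "0 \<le> z3 * D" using z3 D by simp
  qed
  also have "\<dots> < P / (z3 * D)" using hx z3 D by (simp add: divide_strict_right_mono)
  also have "\<dots> \<le> L" using hP z3 D by (simp add: divide_le_eq mult.commute mult.left_commute)
  finally show ?thesis .
qed

lemma nat_ceil_le: "real (nat \<lceil>y\<rceil>) \<le> max 0 (y + 1)"
proof (cases "\<lceil>y\<rceil> \<le> 0")
  case True then show ?thesis by simp
next
  case False
  then have "real (nat \<lceil>y\<rceil>) = of_int \<lceil>y\<rceil>" by simp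
  also have "\<dots> \<le> y + 1" by (rule of_int_ceiling_le_add_one)
  finally show ?thesis by simp
qed


lemma beta_id: "0 < (a::real) \<Longrightarrow> 0 < u \<Longrightarrow> 0 < v \<Longrightarrow> a / (u * v) * (u / a) * v = 1"
  by (simp add: field_simps)

theorem mainTheorem10:
  fixes A :: "real^'n^'n"
    and Q1 :: "real^'k^'n" and Q2 :: "real^'s^'n"
    and R1 :: "real^'n^'k" and R2 :: "real^'n^'s"
    and N1 :: "real^'k^'k" and N2 :: "real^'s^'s"
    and lam :: "nat \<Rightarrow> complex" and v :: "nat \<Rightarrow> complex^'n"
    and \<gamma> \<epsilon>2 \<epsilon>3 :: real and x :: "real^'n"
  defines "n \<equiv> CARD('n)" and "k \<equiv> CARD('k)"
  assumes dims: "CARD('k) + CARD('s) = CARD('n)"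
    \<comment> \<open>A diagonalizable (over C) with eigenpairs (lam i, v i), i = 1..n\<close>
    and eig: "\<And>i. i \<in> {1..n} \<Longrightarrow> cmat A *v v i = lam i *s v i"
    and inj: "inj_on v {1..n}"
    and indep: "vec.independent (v ` {1..n})"
    and spans: "vec.span (v ` {1..n}) = UNIV"
    \<comment> \<open>ordering of the moduli of the eigenvalues\<close>
    and ord1: "2 \<le> k \<Longrightarrow> cmod (lam 1) > cmod (lam 2)"
    and ord_u: "\<And>i. 1 \<le> i \<Longrightarrow> i < k \<Longrightarrow> cmod (lam i) \<ge> cmod (lam (Suc i))"
    and gt1: "cmod (lam k) > 1"
    and lt1: "1 > cmod (lam (Suc k))"
    and ord_s: "\<And>i. Suc k \<le> i \<Longrightarrow> i < n \<Longrightarrow> cmod (lam i) \<ge> cmod (lam (Suc i))"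
    \<comment> \<open>Q1, Q2 orthonormal columns spanning the unstable / stable subspaces\<close>
    and Q1_orth: "transpose Q1 ** Q1 = mat 1"
    and Q2_orth: "transpose Q2 ** Q2 = mat 1"
    and Q1_span: "range (\<lambda>y. Q1 *v y) = {z. cvec z \<in> vec.span (v ` {1..k})}"
    and Q2_span: "range (\<lambda>y. Q2 *v y) = {z. cvec z \<in> vec.span (v ` {Suc k..n})}"
    \<comment> \<open>Q^{-1} = [R1; R2]\<close>
    and R11: "R1 ** Q1 = mat 1" and R12: "R1 ** Q2 = 0"
    and R21: "R2 ** Q1 = 0" and R22: "R2 ** Q2 = mat 1"
    and QR: "Q1 ** R1 + Q2 ** R2 = mat 1"
    \<comment> \<open>Q^{-1} A Q = diag(N1, N2)\<close>
    and N1_def: "R1 ** A ** Q1 = N1" and N2_def: "R2 ** A ** Q2 = N2"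
    and off12: "R1 ** A ** Q2 = 0" and off21: "R2 ** A ** Q1 = 0"
    and \<gamma>_pos: "\<gamma> > 0" and \<epsilon>2_pos: "\<epsilon>2 > 0" and \<epsilon>3_pos: "\<epsilon>3 > 0"
    and hx: "norm (R1 *v x) > \<gamma> * norm (R2 *v x)"
  shows
    "(\<forall>\<omega>::nat.
        norm (R1 *v (matpow A \<omega> *v x)) >
          (1 / ((1 + 1/\<gamma>) * zeta \<epsilon>3 (matrix_inv N1) * zeta \<epsilon>2 N2 * snorm R2)
           * (cmod (lam k) / ((1 + \<epsilon>3 * cmod (lam k)) * (cmod (lam (Suc k)) + \<epsilon>2))) ^ \<omega>)
          * norm (R2 *v (matpow A \<omega> *v x)))
     \<and> (cmod (lam k) / ((1 + \<epsilon>3 * cmod (lam k)) * (cmod (lam (Suc k)) + \<epsilon>2)) > 1 \<longrightarrow>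
        (\<exists>\<omega>0 :: real \<Rightarrow> nat.
           (\<lambda>g. real (\<omega>0 g)) \<in> O(\<lambda>g. ln (g / \<gamma>)) \<and>
           (\<forall>\<gamma>p>0. \<forall>\<omega>. \<omega> > \<omega>0 \<gamma>p \<longrightarrow>
              norm (R1 *v (matpow A \<omega> *v x)) > \<gamma>p * norm (R2 *v (matpow A \<omega> *v x)))))"
proof -
  define I where "I = {1..n}"
  have finI: "finite I" by (simp add: I_def)
  have c0k: "0 < CARD('k)" by (simp add: card_gt_0_iff)
  have c0s: "0 < CARD('s)" by (simp add: card_gt_0_iff)
  have sk: "Suc k \<le> n" using dims c0s unfolding n_def k_def by linarith
  have k1: "1 \<le> k" unfolding k_def using c0k by linarith
  have injI: "inj_on v I" using inj by (simp add: I_def)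
  have E1: "\<And>e. (\<Sum>i\<in>I. e i *s v i) = 0 \<Longrightarrow> \<forall>i\<in>I. e i = 0"
  proof -
    fix e assume h: "(\<Sum>i\<in>I. e i *s v i) = 0"
    define cc where "cc u = e (inv_into I v u)" for u
    have "(\<Sum>u\<in>v ` I. cc u *s u) = (\<Sum>i\<in>I. cc (v i) *s v i)"
      by (rule sum.reindex[OF injI, unfolded comp_def])
    also have "\<dots> = (\<Sum>i\<in>I. e i *s v i)" using injI by (intro sum.cong) (auto simp: cc_def)
    finally have "(\<Sum>u\<in>v ` I. cc u *s u) = 0" using h by simp
    with indep[folded I_def] have "\<forall>u\<in>v ` I. cc u = 0" unfolding vec.independent_explicit by blast
    then show "\<forall>i\<in>I. e i = 0" using injI by (auto simp: cc_def)
  qed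
  have E2: "\<And>J z. J \<subseteq> I \<Longrightarrow> z \<in> vec.span (v ` J) \<Longrightarrow> \<exists>a. z = (\<Sum>i\<in>J. a i *s v i)"
  proof -
    fix J z assume J: "J \<subseteq> I" and z: "z \<in> vec.span (v ` J)"
    have fJ: "finite J" using J finI finite_subset by blast
    have injJ: "inj_on v J" using injI J by (auto intro: inj_on_subset)
    from z obtain u where "z = (\<Sum>w\<in>v ` J. u w *s w)" using vec.span_finite[of "v ` J"] fJ by auto
    also have "\<dots> = (\<Sum>i\<in>J. u (v i) *s v i)" by (rule sum.reindex[OF injJ, unfolded comp_def])
    finally have "z = (\<Sum>i\<in>J. u (v i) *s v i)" .
    then show "\<exists>a. z = (\<Sum>i\<in>J. a i *s v i)" by (intro exI[of _ "\<lambda>i. u (v i)"])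
  qed
  have E2': "\<And>J a. (\<Sum>i\<in>J. a i *s v i) \<in> vec.span (v ` J)"
    by (intro vec.span_sum vec.span_scale vec.span_base) auto
  have E3: "\<And>J a. J \<subseteq> I \<Longrightarrow> (\<Sum>i\<in>J. a i *s v i) = (\<Sum>i\<in>I. (if i \<in> J then a i else 0) *s v i)"
  proof -
    fix J a assume J: "J \<subseteq> I"
    have "(\<Sum>i\<in>I. (if i \<in> J then a i else 0) *s v i) = (\<Sum>i\<in>I. if i \<in> J then a i *s v i else 0)"
      by (intro sum.cong) auto
    also have "\<dots> = (\<Sum>i\<in>I \<inter> J. a i *s v i)" by (rule sum.inter_restrict[symmetric]) (rule finI)
    also have "I \<inter> J = J" using J by blast
    finally show "(\<Sum>i\<in>J. a i *s v i) = (\<Sum>i\<in>I. (if i \<in> J then a i else 0) *s v i)" by simp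
  qed
  have "\<forall>z. \<exists>a. z = (\<Sum>i\<in>I. a i *s v i)"
    using E2[of I] spans by (auto simp: I_def)
  then obtain c where c: "\<And>z. z = (\<Sum>i\<in>I. c z i *s v i)" by metis
  have uniq: "\<And>z a. z = (\<Sum>i\<in>I. a i *s v i) \<Longrightarrow> \<forall>i\<in>I. c z i = a i"
  proof -
    fix z a assume h: "z = (\<Sum>i\<in>I. a i *s v i)"
    have "(\<Sum>i\<in>I. (c z i - a i) *s v i) = (\<Sum>i\<in>I. c z i *s v i) - (\<Sum>i\<in>I. a i *s v i)"
      by (simp add: vector_sub_rdistrib sum_subtractf)
    also have "\<dots> = z - z" by (simp only: c[of z, symmetric] h[symmetric])
    also have "\<dots> = 0" by simp
    finally show "\<forall>i\<in>I. c z i = a i" using E1 by fastforce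
  qed
  have c_add: "\<And>z w i. i \<in> I \<Longrightarrow> c (z + w) i = c z i + c w i"
  proof -
    fix z w i assume i: "i \<in> I"
    have "(\<Sum>i\<in>I. (c z i + c w i) *s v i) = (\<Sum>i\<in>I. c z i *s v i) + (\<Sum>i\<in>I. c w i *s v i)"
      by (simp add: vector_sadd_rdistrib sum.distrib)
    also have "\<dots> = z + w" by (simp only: c[of z, symmetric] c[of w, symmetric])
    finally show "c (z + w) i = c z i + c w i" using uniq i by metis
  qed
  have c_scal: "\<And>z r i. i \<in> I \<Longrightarrow> c (r *s z) i = r * c z i"
  proof -
    fix z r i assume i: "i \<in> I"
    have "(\<Sum>i\<in>I. (r * c z i) *s v i) = r *s (\<Sum>i\<in>I. c z i *s v i)"
      by (simp add: vec.scale_sum_right vector_smult_assoc)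
    also have "\<dots> = r *s z" by (simp only: c[of z, symmetric])
    finally show "c (r *s z) i = r * c z i" using uniq i by metis
  qed
  have scaleR_cv: "\<And>r (z::complex^'n). r *\<^sub>R z = complex_of_real r *s z"
  proof -
    fix r and z :: "complex^'n"
    have "\<forall>i. (r *\<^sub>R z)$i = (complex_of_real r *s z)$i"
    proof
      fix i
      have "(r *\<^sub>R z)$i = r *\<^sub>R (z$i)" by simp
      also have "\<dots> = complex_of_real r * z$i" by (rule scaleR_conv_of_real)
      finally show "(r *\<^sub>R z)$i = (complex_of_real r *s z)$i" by simp
    qed
    then show "r *\<^sub>R z = complex_of_real r *s z" using vec_eq_iff by blast
  qed
  have "\<forall>i\<in>I. \<exists>B>0. \<forall>z. norm (c z i) \<le> norm z * B"
  proof
    fix i assume i: "i \<in> I"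
    have "linear (\<lambda>z. c z i)"
      by (rule linearI) (simp_all add: c_add[OF i] scaleR_cv c_scal[OF i] scaleR_conv_of_real)
    then have "bounded_linear (\<lambda>z. c z i)" by (simp add: linear_conv_bounded_linear)
    then show "\<exists>B>0. \<forall>z. norm (c z i) \<le> norm z * B" by (rule bounded_linear.pos_bounded)
  qed
  then obtain B where B: "\<And>i z. i \<in> I \<Longrightarrow> norm (c z i) \<le> norm z * B i"
    and Bpos: "\<And>i. i \<in> I \<Longrightarrow> 0 < B i" by metis
  define K where "K = (\<Sum>i\<in>I. B i * norm (v i))"
  have K0: "0 \<le> K" unfolding K_def using Bpos by (intro sum_nonneg) (simp add: less_imp_le)
  have Kbound: "\<And>z. (\<Sum>i\<in>I. norm (c z i) * norm (v i)) \<le> K * norm z"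
  proof -
    fix z
    have "(\<Sum>i\<in>I. norm (c z i) * norm (v i)) \<le> (\<Sum>i\<in>I. B i * norm (v i) * norm z)"
    proof (rule sum_mono)
      fix i assume i: "i \<in> I"
      show "norm (c z i) * norm (v i) \<le> B i * norm (v i) * norm z"
        using mult_right_mono[OF B[OF i, of z] norm_ge_zero[of "v i"]] by (simp add: mult_ac)
    qed
    then show "(\<Sum>i\<in>I. norm (c z i) * norm (v i)) \<le> K * norm z"
      by (simp add: K_def sum_distrib_right)
  qed
  define Ac where "Ac = cmat A"
  have Av: "\<And>i. i \<in> I \<Longrightarrow> Ac *v v i = lam i *s v i" using eig by (simp add: Ac_def I_def)
  have Amul: "\<And>a. Ac *v (\<Sum>i\<in>I. a i *s v i) = (\<Sum>i\<in>I. (a i * lam i) *s v i)"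
  proof -
    fix a
    have "Ac *v (\<Sum>i\<in>I. a i *s v i) = (\<Sum>i\<in>I. a i *s (Ac *v v i))"
      by (simp add: mv_sum finI vector_scalar_commute)
    also have "\<dots> = (\<Sum>i\<in>I. (a i * lam i) *s v i)"
      by (intro sum.cong refl) (simp add: Av vector_smult_assoc mult_ac)
    finally show "Ac *v (\<Sum>i\<in>I. a i *s v i) = (\<Sum>i\<in>I. (a i * lam i) *s v i)" .
  qed
  define P where "P t z = ((*v) Ac ^^ t) z" for t z
  have PSuc: "\<And>t z. P (Suc t) z = Ac *v P t z" by (simp add: P_def)
  have P0: "\<And>z. P 0 z = z" by (simp add: P_def)
  have Psum: "\<And>t a. P t (\<Sum>i\<in>I. a i *s v i) = (\<Sum>i\<in>I. (a i * lam i ^ t) *s v i)"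
  proof -
    fix t a show "P t (\<Sum>i\<in>I. a i *s v i) = (\<Sum>i\<in>I. (a i * lam i ^ t) *s v i)"
    proof (induction t)
      case 0 show ?case by (simp add: P0)
    next
      case (Suc t)
      have "P (Suc t) (\<Sum>i\<in>I. a i *s v i) = Ac *v (\<Sum>i\<in>I. (a i * lam i ^ t) *s v i)"
        using Suc by (simp add: PSuc)
      also have "\<dots> = (\<Sum>i\<in>I. (a i * lam i ^ Suc t) *s v i)"
        by (simp add: Amul mult_ac)
      finally show ?case .
    qed
  qed
  have Pcvec0: "\<And>t y. cvec (((*v) A ^^ t) y) = P t (cvec y)"
  proof -
    fix t y show "cvec (((*v) A ^^ t) y) = P t (cvec y)"
    proof (induction t)
      case 0 show ?case by (simp add: P0)
    next
      case (Suc t)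
      show ?case by (simp add: PSuc Suc.IH[symmetric] Ac_def cmat_mv)
    qed
  qed
  have Pcvec: "\<And>t y. cvec (matpow A t *v y) = P t (cvec y)"
    by (simp add: matpow_mv Pcvec0)
  define Iu where "Iu = {1..k}"
  define Is where "Is = {Suc k..n}"
  have IuI: "Iu \<subseteq> I" and IsI: "Is \<subseteq> I" using sk by (auto simp: Iu_def Is_def I_def)
  define Su where "Su = vec.span (v ` Iu)"
  define Ss where "Ss = vec.span (v ` Is)"
  have Q1S: "\<And>w. cmat Q1 *v w \<in> Su"
  proof -
    fix w :: "complex^'k"
    have "cmat Q1 *v w = cmat Q1 *v (cvec (rvec w) + \<i> *s cvec (imv w))"
      by (rule arg_cong[OF re_im_split])
    also have "\<dots> = cvec (Q1 *v rvec w) + \<i> *s cvec (Q1 *v imv w)"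
      by (simp add: matrix_vector_right_distrib vector_scalar_commute cmat_mv)
    finally have e: "cmat Q1 *v w = cvec (Q1 *v rvec w) + \<i> *s cvec (Q1 *v imv w)" .
    have m: "\<And>a. cvec (Q1 *v a) \<in> Su"
    proof -
      fix a
      have "Q1 *v a \<in> range (\<lambda>y. Q1 *v y)" by simp
      then show "cvec (Q1 *v a) \<in> Su" unfolding Q1_span Su_def Iu_def by simp
    qed
    show "cmat Q1 *v w \<in> Su" unfolding e Su_def
      using m[unfolded Su_def] by (intro vec.span_add vec.span_scale) auto
  qed
  have Q2S: "\<And>w. cmat Q2 *v w \<in> Ss"
  proof -
    fix w :: "complex^'s"
    have "cmat Q2 *v w = cmat Q2 *v (cvec (rvec w) + \<i> *s cvec (imv w))"
      by (rule arg_cong[OF re_im_split])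
    also have "\<dots> = cvec (Q2 *v rvec w) + \<i> *s cvec (Q2 *v imv w)"
      by (simp add: matrix_vector_right_distrib vector_scalar_commute cmat_mv)
    finally have e: "cmat Q2 *v w = cvec (Q2 *v rvec w) + \<i> *s cvec (Q2 *v imv w)" .
    have m: "\<And>a. cvec (Q2 *v a) \<in> Ss"
    proof -
      fix a
      have "Q2 *v a \<in> range (\<lambda>y. Q2 *v y)" by simp
      then show "cvec (Q2 *v a) \<in> Ss" unfolding Q2_span Ss_def Is_def by simp
    qed
    show "cmat Q2 *v w \<in> Ss" unfolding e Ss_def
      using m[unfolded Ss_def] by (intro vec.span_add vec.span_scale) auto
  qed
  have Su_c: "\<And>z i. z \<in> Su \<Longrightarrow> i \<in> I \<Longrightarrow> k < i \<Longrightarrow> c z i = 0"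
  proof -
    fix z i assume z: "z \<in> Su" and i: "i \<in> I" "k < i"
    obtain a where "z = (\<Sum>j\<in>Iu. a j *s v j)" using E2[OF IuI] z Su_def by blast
    then have zz: "z = (\<Sum>j\<in>I. (if j \<in> Iu then a j else 0) *s v j)" by (simp only: E3[OF IuI])
    have "c z i = (if i \<in> Iu then a i else 0)" using uniq[OF zz] i by simp
    then show "c z i = 0" using i by (simp add: Iu_def)
  qed
  have Ss_c: "\<And>z i. z \<in> Ss \<Longrightarrow> i \<in> I \<Longrightarrow> i \<le> k \<Longrightarrow> c z i = 0"
  proof -
    fix z i assume z: "z \<in> Ss" and i: "i \<in> I" "i \<le> k"
    obtain a where "z = (\<Sum>j\<in>Is. a j *s v j)" using E2[OF IsI] z Ss_def by blast
    then have zz: "z = (\<Sum>j\<in>I. (if j \<in> Is then a j else 0) *s v j)" by (simp only: E3[OF IsI])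
    have "c z i = (if i \<in> Is then a i else 0)" using uniq[OF zz] i by simp
    then show "c z i = 0" using i by (simp add: Is_def)
  qed
  have SuSs: "\<And>z. z \<in> Su \<Longrightarrow> z \<in> Ss \<Longrightarrow> z = 0"
  proof -
    fix z assume z: "z \<in> Su" "z \<in> Ss"
    have "z = (\<Sum>i\<in>I. c z i *s v i)" by (rule c)
    also have "\<dots> = 0"
    proof (intro sum.neutral ballI)
      fix i assume i: "i \<in> I"
      show "c z i *s v i = 0"
      proof (cases "i \<le> k")
        case True then show ?thesis using Ss_c[OF z(2) i] by simp
      next
        case False then show ?thesis using Su_c[OF z(1) i] by simp
      qed
    qed
    finally show "z = 0" .
  qed
  have zero_c: "\<And>z. (\<forall>i\<in>I. c z i = 0) \<Longrightarrow> z = 0"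
  proof -
    fix z assume h: "\<forall>i\<in>I. c z i = 0"
    have "z = (\<Sum>i\<in>I. c z i *s v i)" by (rule c)
    also have "\<dots> = 0" using h by simp
    finally show "z = 0" .
  qed
  have G1: "\<And>z \<mu>. z \<noteq> 0 \<Longrightarrow> Ac *v z = \<mu> *s z \<Longrightarrow> \<exists>i\<in>I. c z i \<noteq> 0 \<and> \<mu> = lam i"
  proof -
    fix z \<mu> assume z0: "z \<noteq> 0" and ev: "Ac *v z = \<mu> *s z"
    have "Ac *v z = Ac *v (\<Sum>i\<in>I. c z i *s v i)" by (rule arg_cong[OF c])
    also have "\<dots> = (\<Sum>i\<in>I. (c z i * lam i) *s v i)" by (rule Amul)
    finally have "\<forall>i\<in>I. c (Ac *v z) i = c z i * lam i" by (rule uniq)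
    moreover have "\<forall>i\<in>I. c (Ac *v z) i = \<mu> * c z i" using c_scal ev by simp
    moreover obtain i where i: "i \<in> I" "c z i \<noteq> 0" using zero_c z0 by blast
    ultimately show "\<exists>i\<in>I. c z i \<noteq> 0 \<and> \<mu> = lam i" by (metis mult.commute mult_left_cancel)
  qed
  have AQ2: "A ** Q2 = Q2 ** N2"
  proof -
    have "A ** Q2 = (Q1 ** R1 + Q2 ** R2) ** A ** Q2" using QR by simp
    also have "\<dots> = Q1 ** (R1 ** A ** Q2) + Q2 ** (R2 ** A ** Q2)"
      by (simp add: matrix_add_rdistrib' matrix_mul_assoc)
    also have "\<dots> = Q2 ** N2" using off12 N2_def by simp
    finally show ?thesis .
  qed
  have AQ1: "A ** Q1 = Q1 ** N1"
  proof -
    have "A ** Q1 = (Q1 ** R1 + Q2 ** R2) ** A ** Q1" using QR by simp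
    also have "\<dots> = Q1 ** (R1 ** A ** Q1) + Q2 ** (R2 ** A ** Q1)"
      by (simp add: matrix_add_rdistrib' matrix_mul_assoc)
    also have "\<dots> = Q1 ** N1" using off21 N1_def by simp
    finally show ?thesis .
  qed
  have R1A: "R1 ** A = N1 ** R1"
  proof -
    have "R1 ** A = R1 ** A ** (Q1 ** R1 + Q2 ** R2)" using QR by simp
    also have "\<dots> = (R1 ** A ** Q1) ** R1 + (R1 ** A ** Q2) ** R2"
      by (simp add: matrix_add_ldistrib matrix_mul_assoc)
    also have "\<dots> = N1 ** R1" using off12 N1_def by simp
    finally show ?thesis .
  qed
  have R2A: "R2 ** A = N2 ** R2"
  proof -
    have "R2 ** A = R2 ** A ** (Q1 ** R1 + Q2 ** R2)" using QR by simp
    also have "\<dots> = (R2 ** A ** Q1) ** R1 + (R2 ** A ** Q2) ** R2"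
      by (simp add: matrix_add_ldistrib matrix_mul_assoc)
    also have "\<dots> = N2 ** R2" using off21 N2_def by simp
    finally show ?thesis .
  qed
  have G3s: "\<And>\<mu>. is_eigenvalue N2 \<mu> \<Longrightarrow> \<exists>i\<in>Is. \<mu> = lam i"
  proof -
    fix \<mu> assume "is_eigenvalue N2 \<mu>"
    then obtain w where w0: "w \<noteq> 0" and ev: "cmat N2 *v w = \<mu> *s w" unfolding is_eigenvalue_def by blast
    define z where "z = cmat Q2 *v w"
    have "cmat R2 *v z = w" by (simp add: z_def matrix_vector_mul_assoc cmat_mult[symmetric] R22 cmat_one)
    then have z0: "z \<noteq> 0" using w0 by auto
    have "Ac *v z = cmat (A ** Q2) *v w" by (simp add: z_def Ac_def matrix_vector_mul_assoc cmat_mult)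
    also have "\<dots> = cmat Q2 *v (cmat N2 *v w)" by (simp add: AQ2 cmat_mult matrix_vector_mul_assoc)
    also have "\<dots> = \<mu> *s z" by (simp add: ev z_def vector_scalar_commute)
    finally have evz: "Ac *v z = \<mu> *s z" .
    obtain i where i: "i \<in> I" "c z i \<noteq> 0" "\<mu> = lam i" using G1[OF z0 evz] by blast
    have "z \<in> Ss" unfolding z_def by (rule Q2S)
    then have "\<not> i \<le> k" using Ss_c i by blast
    then show "\<exists>i\<in>Is. \<mu> = lam i" using i by (auto simp: Is_def I_def)
  qed
  have G3u: "\<And>\<mu>. is_eigenvalue N1 \<mu> \<Longrightarrow> \<exists>i\<in>Iu. \<mu> = lam i"
  proof -
    fix \<mu> assume "is_eigenvalue N1 \<mu>"
    then obtain w where w0: "w \<noteq> 0" and ev: "cmat N1 *v w = \<mu> *s w" unfolding is_eigenvalue_def by blast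
    define z where "z = cmat Q1 *v w"
    have "cmat R1 *v z = w" by (simp add: z_def matrix_vector_mul_assoc cmat_mult[symmetric] R11 cmat_one)
    then have z0: "z \<noteq> 0" using w0 by auto
    have "Ac *v z = cmat (A ** Q1) *v w" by (simp add: z_def Ac_def matrix_vector_mul_assoc cmat_mult)
    also have "\<dots> = cmat Q1 *v (cmat N1 *v w)" by (simp add: AQ1 cmat_mult matrix_vector_mul_assoc)
    also have "\<dots> = \<mu> *s z" by (simp add: ev z_def vector_scalar_commute)
    finally have evz: "Ac *v z = \<mu> *s z" .
    obtain i where i: "i \<in> I" "c z i \<noteq> 0" "\<mu> = lam i" using G1[OF z0 evz] by blast
    have "z \<in> Su" unfolding z_def by (rule Q1S)
    then have "\<not> k < i" using Su_c i by blast
    then show "\<exists>i\<in>Iu. \<mu> = lam i" using i by (auto simp: Iu_def I_def)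
  qed
  have QRc: "cmat Q1 ** cmat R1 + cmat Q2 ** cmat R2 = mat 1"
    using arg_cong[OF QR, of cmat] by (simp add: cmat_add cmat_mult cmat_one)
  have nz: "\<And>i. i \<in> I \<Longrightarrow> v i \<noteq> 0"
  proof
    fix i assume i: "i \<in> I" and h: "v i = 0"
    then have "0 \<in> v ` I" by force
    then show False using indep[folded I_def] vec.dependent_zero by blast
  qed
  have G4s: "\<exists>w. w \<noteq> 0 \<and> cmat N2 *v w = lam (Suc k) *s w"
  proof -
    let ?u = "v (Suc k)"
    have skI: "Suc k \<in> I" using sk by (simp add: I_def)
    have u0: "?u \<noteq> 0" using nz skI by blast
    have uS: "?u \<in> Ss" unfolding Ss_def Is_def by (rule vec.span_base) (use sk in simp)
    define w where "w = cmat R2 *v ?u"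
    define u1 where "u1 = cmat Q1 *v (cmat R1 *v ?u)"
    have "?u = (cmat Q1 ** cmat R1 + cmat Q2 ** cmat R2) *v ?u" using QRc by simp
    also have "\<dots> = u1 + cmat Q2 *v w"
      by (simp add: u1_def w_def matrix_vector_mult_add_rdistrib matrix_vector_mul_assoc)
    finally have dec: "?u = u1 + cmat Q2 *v w" .
    have "u1 \<in> Su" unfolding u1_def by (rule Q1S)
    moreover have "u1 \<in> Ss"
    proof -
      have "u1 = ?u - cmat Q2 *v w" using dec by (simp add: algebra_simps)
      then show ?thesis using uS Q2S[of w] unfolding Ss_def by (simp add: vec.span_diff)
    qed
    ultimately have "u1 = 0" by (rule SuSs)
    then have uw: "?u = cmat Q2 *v w" using dec by simp
    have w0: "w \<noteq> 0" using uw u0 by auto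
    have "cmat N2 *v w = cmat R2 *v (Ac *v (cmat Q2 *v w))"
      by (simp add: Ac_def matrix_vector_mul_assoc cmat_mult[symmetric] N2_def matrix_mul_assoc)
    also have "\<dots> = cmat R2 *v (lam (Suc k) *s ?u)" by (simp add: uw[symmetric] Av skI)
    also have "\<dots> = lam (Suc k) *s w" by (simp add: w_def vector_scalar_commute)
    finally show ?thesis using w0 by blast
  qed
  have G4u: "\<exists>w. w \<noteq> 0 \<and> cmat N1 *v w = lam k *s w"
  proof -
    let ?u = "v k"
    have kI: "k \<in> I" using sk k1 by (simp add: I_def)
    have u0: "?u \<noteq> 0" using nz kI by blast
    have uS: "?u \<in> Su" unfolding Su_def Iu_def by (rule vec.span_base) (use k1 in simp)
    define w where "w = cmat R1 *v ?u"
    define u2 where "u2 = cmat Q2 *v (cmat R2 *v ?u)"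
    have "?u = (cmat Q1 ** cmat R1 + cmat Q2 ** cmat R2) *v ?u" using QRc by simp
    also have "\<dots> = cmat Q1 *v w + u2"
      by (simp add: u2_def w_def matrix_vector_mult_add_rdistrib matrix_vector_mul_assoc)
    finally have dec: "?u = cmat Q1 *v w + u2" .
    have "u2 \<in> Ss" unfolding u2_def by (rule Q2S)
    moreover have "u2 \<in> Su"
    proof -
      have "u2 = ?u - cmat Q1 *v w" using dec by (simp add: algebra_simps)
      then show ?thesis using uS Q1S[of w] unfolding Su_def by (simp add: vec.span_diff)
    qed
    ultimately have "u2 = 0" using SuSs by blast
    then have uw: "?u = cmat Q1 *v w" using dec by simp
    have w0: "w \<noteq> 0" using uw u0 by auto
    have "cmat N1 *v w = cmat R1 *v (Ac *v (cmat Q1 *v w))"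
      by (simp add: Ac_def matrix_vector_mul_assoc cmat_mult[symmetric] N1_def matrix_mul_assoc)
    also have "\<dots> = cmat R1 *v (lam k *s ?u)" by (simp add: uw[symmetric] Av kI)
    also have "\<dots> = lam k *s w" by (simp add: w_def vector_scalar_commute)
    finally show ?thesis using w0 by blast
  qed
  have mon_s: "\<And>i. i \<in> Is \<Longrightarrow> cmod (lam i) \<le> cmod (lam (Suc k))"
  proof -
    have all: "\<forall>d. Suc k + d \<le> n \<longrightarrow> cmod (lam (Suc k + d)) \<le> cmod (lam (Suc k))"
    proof
      fix d show "Suc k + d \<le> n \<longrightarrow> cmod (lam (Suc k + d)) \<le> cmod (lam (Suc k))"
      proof (induction d)
        case 0 show ?case by simp
      next
        case (Suc d)
        show ?case
        proof
          assume h: "Suc k + Suc d \<le> n"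
          have "cmod (lam (Suc (Suc k + d))) \<le> cmod (lam (Suc k + d))"
            using ord_s[of "Suc k + d"] h by simp
          then show "cmod (lam (Suc k + Suc d)) \<le> cmod (lam (Suc k))" using Suc h by simp
        qed
      qed
    qed
    fix i assume "i \<in> Is"
    then obtain d where "i = Suc k + d" "Suc k + d \<le> n" unfolding Is_def
      by (metis atLeastAtMost_iff le_Suc_ex)
    then show "cmod (lam i) \<le> cmod (lam (Suc k))" using all by blast
  qed
  have mon_u: "\<And>i. i \<in> Iu \<Longrightarrow> cmod (lam k) \<le> cmod (lam i)"
  proof -
    have all: "\<forall>d. d < k \<longrightarrow> cmod (lam k) \<le> cmod (lam (k - d))"
    proof
      fix d show "d < k \<longrightarrow> cmod (lam k) \<le> cmod (lam (k - d))"
      proof (induction d)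
        case 0 show ?case by simp
      next
        case (Suc d)
        show ?case
        proof
          assume h: "Suc d < k"
          have e: "Suc (k - Suc d) = k - d" using h by simp
          have "cmod (lam (Suc (k - Suc d))) \<le> cmod (lam (k - Suc d))"
            using ord_u[of "k - Suc d"] h by simp
          then show "cmod (lam k) \<le> cmod (lam (k - Suc d))" using Suc h e by simp
        qed
      qed
    qed
    fix i assume i: "i \<in> Iu"
    then have "k - i < k" "k - (k - i) = i" unfolding Iu_def by auto
    then show "cmod (lam k) \<le> cmod (lam i)" using all by metis
  qed
  have rho2: "spec_radius N2 = cmod (lam (Suc k))"
  proof -
    let ?S = "{cmod \<mu> | \<mu>. is_eigenvalue N2 \<mu>}"
    have "?S \<subseteq> (\<lambda>i. cmod (lam i)) ` Is" using G3s by blast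
    then have fin: "finite ?S" by (rule finite_subset) (simp add: Is_def)
    have mem: "cmod (lam (Suc k)) \<in> ?S" using G4s unfolding is_eigenvalue_def by blast
    have le: "\<And>y. y \<in> ?S \<Longrightarrow> y \<le> cmod (lam (Suc k))" using G3s mon_s by blast
    show ?thesis unfolding spec_radius_def by (rule Max_eqI[OF fin le mem])
  qed
  have lamu_gt: "\<And>i. i \<in> Iu \<Longrightarrow> 1 < cmod (lam i)" using mon_u gt1 by (meson less_le_trans)
  have cv0: "cvec (0::real^'k) = 0" using cvec_eq0 by blast
  have N1ker: "\<And>y. N1 *v y = 0 \<Longrightarrow> y = 0"
  proof (rule ccontr)
    fix y assume h: "N1 *v y = 0" "y \<noteq> 0"
    have "cmat N1 *v cvec y = 0 *s cvec y" using h by (simp add: cmat_mv cv0)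
    then have "is_eigenvalue N1 0" unfolding is_eigenvalue_def using h(2) cvec_eq0 by blast
    then obtain i where "i \<in> Iu" "0 = lam i" using G3u by blast
    then show False using lamu_gt by force
  qed
  obtain B1 where B1: "B1 ** N1 = mat 1" using N1ker matrix_left_invertible_ker by blast
  then have "N1 ** B1 = mat 1" by (simp add: matrix_left_right_inverse)
  then have invN1: "invertible N1" using B1 invertible_def by blast
  define M where "M = matrix_inv N1"
  have NM: "N1 ** M = mat 1" and MN: "M ** N1 = mat 1"
    using someI_ex[OF invN1[unfolded invertible_def]] unfolding M_def matrix_inv_def by auto
  have G3m: "\<And>\<mu>. is_eigenvalue M \<mu> \<Longrightarrow> \<exists>i\<in>Iu. \<mu> = 1 / lam i"
  proof -
    fix \<mu> assume "is_eigenvalue M \<mu>"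
    then obtain w where w0: "w \<noteq> 0" and ev: "cmat M *v w = \<mu> *s w" unfolding is_eigenvalue_def by blast
    have "w = cmat N1 *v (cmat M *v w)" by (simp add: matrix_vector_mul_assoc cmat_mult[symmetric] NM cmat_one)
    also have "\<dots> = \<mu> *s (cmat N1 *v w)" by (simp add: ev vector_scalar_commute)
    finally have wq: "w = \<mu> *s (cmat N1 *v w)" .
    have mu0: "\<mu> \<noteq> 0" using wq w0 by auto
    have "(1/\<mu>) *s w = (1/\<mu>) *s (\<mu> *s (cmat N1 *v w))" by (rule arg_cong[OF wq])
    also have "\<dots> = cmat N1 *v w" using mu0 by (simp add: vector_smult_assoc)
    finally have "is_eigenvalue N1 (1/\<mu>)" using w0 unfolding is_eigenvalue_def by metis
    then obtain i where "i \<in> Iu" "1/\<mu> = lam i" using G3u by blast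
    moreover have "\<mu> = 1 / (1/\<mu>)" by simp
    ultimately show "\<exists>i\<in>Iu. \<mu> = 1 / lam i" by metis
  qed
  have lamk0: "lam k \<noteq> 0" using gt1 by (metis norm_zero not_one_less_zero)
  have G4m: "is_eigenvalue M (1 / lam k)"
  proof -
    obtain w where w0: "w \<noteq> 0" and ev: "cmat N1 *v w = lam k *s w" using G4u by blast
    have "w = cmat M *v (cmat N1 *v w)" by (simp add: matrix_vector_mul_assoc cmat_mult[symmetric] MN cmat_one)
    also have "\<dots> = lam k *s (cmat M *v w)" by (simp add: ev vector_scalar_commute)
    finally have wq: "w = lam k *s (cmat M *v w)" .
    have "(1/lam k) *s w = (1/lam k) *s (lam k *s (cmat M *v w))" by (rule arg_cong[OF wq])
    also have "\<dots> = cmat M *v w" using lamk0 by (simp add: vector_smult_assoc)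
    finally show ?thesis using w0 unfolding is_eigenvalue_def by metis
  qed
  have rho1: "spec_radius M = 1 / cmod (lam k)"
  proof -
    let ?S = "{cmod \<mu> | \<mu>. is_eigenvalue M \<mu>}"
    have "?S \<subseteq> (\<lambda>i. cmod (1 / lam i)) ` Iu" using G3m by blast
    then have fin: "finite ?S" by (rule finite_subset) (simp add: Iu_def)
    have mem: "1 / cmod (lam k) \<in> ?S" using G4m by (force simp: norm_divide)
    have le: "\<And>y. y \<in> ?S \<Longrightarrow> y \<le> 1 / cmod (lam k)"
    proof -
      fix y assume "y \<in> ?S"
      then obtain i where i: "i \<in> Iu" "y = 1 / cmod (lam i)" using G3m by (force simp: norm_divide)
      have le1: "cmod (lam k) \<le> cmod (lam i)" by (rule mon_u[OF i(1)])
      have pos: "0 < cmod (lam i) * cmod (lam k)" using le1 gt1 by (intro mult_pos_pos) linarith+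
      show "y \<le> 1 / cmod (lam k)" using divide_left_mono[OF le1 _ pos, of 1] i(2) by simp
    qed
    show ?thesis unfolding spec_radius_def by (rule Max_eqI[OF fin le mem])
  qed
  define a where "a = cmod (lam k)"
  define b where "b = cmod (lam (Suc k))"
  have apos: "0 < a" and a1: "1 < a" using gt1 unfolding a_def by linarith+
  have b0: "0 \<le> b" by (simp add: b_def)
  have normP: "\<And>t z. norm (P t z) \<le> (\<Sum>i\<in>I. norm (c z i) * cmod (lam i) ^ t * norm (v i))"
  proof -
    fix t z
    have "P t z = P t (\<Sum>i\<in>I. c z i *s v i)" by (rule arg_cong[OF c])
    also have "\<dots> = (\<Sum>i\<in>I. (c z i * lam i ^ t) *s v i)" by (rule Psum)
    finally have "norm (P t z) = norm (\<Sum>i\<in>I. (c z i * lam i ^ t) *s v i)" by simp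
    also have "\<dots> \<le> (\<Sum>i\<in>I. norm ((c z i * lam i ^ t) *s v i))" by (rule norm_sum)
    also have "\<dots> = (\<Sum>i\<in>I. norm (c z i) * cmod (lam i) ^ t * norm (v i))"
      by (simp add: norm_smult_c norm_mult norm_power)
    finally show "norm (P t z) \<le> (\<Sum>i\<in>I. norm (c z i) * cmod (lam i) ^ t * norm (v i))" .
  qed
  have B1: "\<And>t y. norm (matpow N2 t *v y) \<le> K * b ^ t * norm y"
  proof -
    fix t y
    define z where "z = cmat Q2 *v cvec y"
    have zS: "z \<in> Ss" unfolding z_def by (rule Q2S)
    have nzy: "norm z = norm y" by (simp add: z_def cmat_mv norm_cvec isometry[OF Q2_orth])
    have mv: "matpow A t *v (Q2 *v y) = Q2 *v (matpow N2 t *v y)"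
      by (simp add: matrix_vector_mul_assoc matpow_comm[OF AQ2])
    have "norm (matpow N2 t *v y) = norm (Q2 *v (matpow N2 t *v y))" by (simp add: isometry[OF Q2_orth])
    also have "\<dots> = norm (matpow A t *v (Q2 *v y))" by (simp add: mv)
    also have "\<dots> = norm (P t z)" by (simp add: z_def cmat_mv Pcvec[symmetric] norm_cvec)
    also have "\<dots> \<le> (\<Sum>i\<in>I. norm (c z i) * cmod (lam i) ^ t * norm (v i))" by (rule normP)
    also have "\<dots> \<le> (\<Sum>i\<in>I. norm (c z i) * norm (v i) * b ^ t)"
    proof (rule sum_mono)
      fix i assume i: "i \<in> I"
      show "norm (c z i) * cmod (lam i) ^ t * norm (v i) \<le> norm (c z i) * norm (v i) * b ^ t"
      proof (cases "i \<le> k")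
        case True then have "c z i = 0" using Ss_c[OF zS i] by simp
        then show ?thesis by simp
      next
        case False then have "i \<in> Is" using i by (simp add: Is_def I_def)
        then have h2: "cmod (lam i) ^ t \<le> b ^ t" unfolding b_def by (intro power_mono mon_s) auto
        show ?thesis using mult_left_mono[OF h2, of "norm (c z i) * norm (v i)"]
          by (simp add: mult_ac)
      qed
    qed
    also have "\<dots> = (\<Sum>i\<in>I. norm (c z i) * norm (v i)) * b ^ t" by (rule sum_distrib_right[symmetric])
    also have "\<dots> \<le> K * norm z * b ^ t" by (rule mult_right_mono[OF Kbound]) (simp add: b0)
    finally show "norm (matpow N2 t *v y) \<le> K * b ^ t * norm y" using nzy by (simp add: mult_ac)
  qed
  have B2: "\<And>t w. norm w \<le> K * (1/a) ^ t * norm (matpow N1 t *v w)"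
  proof -
    fix t w
    define z where "z = cmat Q1 *v cvec w"
    have zS: "z \<in> Su" unfolding z_def by (rule Q1S)
    have nzw: "norm z = norm w" by (simp add: z_def cmat_mv norm_cvec isometry[OF Q1_orth])
    define z' where "z' = P t z"
    have z'c: "\<forall>i\<in>I. c z' i = c z i * lam i ^ t"
    proof -
      have "z' = P t (\<Sum>i\<in>I. c z i *s v i)" unfolding z'_def by (rule arg_cong[OF c])
      also have "\<dots> = (\<Sum>i\<in>I. (c z i * lam i ^ t) *s v i)" by (rule Psum)
      finally show ?thesis by (rule uniq)
    qed
    have mv: "matpow A t *v (Q1 *v w) = Q1 *v (matpow N1 t *v w)"
      by (simp add: matrix_vector_mul_assoc matpow_comm[OF AQ1])
    have nz': "norm z' = norm (matpow N1 t *v w)"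
    proof -
      have "norm z' = norm (matpow A t *v (Q1 *v w))"
        by (simp add: z'_def z_def cmat_mv Pcvec[symmetric] norm_cvec)
      then show ?thesis by (simp add: mv isometry[OF Q1_orth])
    qed
    have "norm z = norm (\<Sum>i\<in>I. c z i *s v i)" by (rule arg_cong[OF c])
    also have "\<dots> \<le> (\<Sum>i\<in>I. norm (c z i *s v i))" by (rule norm_sum)
    also have "\<dots> = (\<Sum>i\<in>I. norm (c z i) * norm (v i))" by (simp add: norm_smult_c)
    also have "\<dots> \<le> (\<Sum>i\<in>I. norm (c z' i) * norm (v i) * (1/a) ^ t)"
    proof (rule sum_mono)
      fix i assume i: "i \<in> I"
      show "norm (c z i) * norm (v i) \<le> norm (c z' i) * norm (v i) * (1/a) ^ t"
      proof (cases "k < i")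
        case True then show ?thesis using Su_c[OF zS i] apos by simp
      next
        case False
        then have iu: "i \<in> Iu" using i by (simp add: Iu_def I_def)
        have ai: "a \<le> cmod (lam i)" using mon_u[OF iu] a_def by simp
        have "norm (c z i) * a ^ t \<le> norm (c z i) * cmod (lam i) ^ t"
          by (intro mult_left_mono power_mono) (use ai apos in auto)
        also have "\<dots> = norm (c z' i)" using z'c i by (simp add: norm_mult norm_power)
        finally have h: "norm (c z i) * a ^ t \<le> norm (c z' i)" .
        have h2: "norm (c z i) \<le> norm (c z' i) * (1/a) ^ t"
          using h zero_less_power[OF apos, of t] by (simp add: power_one_over pos_le_divide_eq)
        show ?thesis using mult_right_mono[OF h2 norm_ge_zero[of "v i"]] by (simp add: mult_ac)
      qed
    qed
    also have "\<dots> = (\<Sum>i\<in>I. norm (c z' i) * norm (v i)) * (1/a) ^ t" by (rule sum_distrib_right[symmetric])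
    also have "\<dots> \<le> K * norm z' * (1/a) ^ t" by (rule mult_right_mono[OF Kbound]) (simp add: apos less_imp_le)
    finally show "norm w \<le> K * (1/a) ^ t * norm (matpow N1 t *v w)" using nzw nz' by (simp add: mult_ac)
  qed
  have B3: "\<And>t. snorm (matpow M t) \<le> K * (1/a) ^ t"
  proof -
    fix t show "snorm (matpow M t) \<le> K * (1/a) ^ t"
    proof (rule snorm_le)
      fix y
      have "matpow N1 t *v (matpow M t *v y) = y" by (simp add: matrix_vector_mul_assoc matpow_inv[OF NM])
      then show "norm (matpow M t *v y) \<le> K * (1/a) ^ t * norm y" using B2[of "matpow M t *v y" t] by simp
    qed
  qed
  have B4: "\<And>t. snorm (matpow N2 t) \<le> K * b ^ t" by (rule snorm_le) (rule B1)
  have r3: "spec_radius M + \<epsilon>3 = 1/a + \<epsilon>3" using rho1 by (simp add: a_def)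
  have r2: "spec_radius N2 + \<epsilon>2 = b + \<epsilon>2" using rho2 by (simp add: b_def)
  have ia: "0 < 1/a" using apos by simp
  have q3: "0 < spec_radius M + \<epsilon>3" using r3 ia \<epsilon>3_pos by linarith
  have q2: "0 < spec_radius N2 + \<epsilon>2" using r2 b0 \<epsilon>2_pos by linarith
  have B3': "\<And>t. snorm (matpow M t) \<le> K * (spec_radius M + \<epsilon>3) ^ t"
  proof -
    fix t
    have "(1/a) ^ t \<le> (1/a + \<epsilon>3) ^ t" using apos \<epsilon>3_pos by (intro power_mono) auto
    then show "snorm (matpow M t) \<le> K * (spec_radius M + \<epsilon>3) ^ t"
      unfolding r3 using B3[of t] mult_left_mono[OF _ K0] by (meson order_trans)
  qed
  have B4': "\<And>t. snorm (matpow N2 t) \<le> K * (spec_radius N2 + \<epsilon>2) ^ t"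
  proof -
    fix t
    have "b ^ t \<le> (b + \<epsilon>2) ^ t" using b0 \<epsilon>2_pos by (intro power_mono) auto
    then show "snorm (matpow N2 t) \<le> K * (spec_radius N2 + \<epsilon>2) ^ t"
      unfolding r2 using B4[of t] mult_left_mono[OF _ K0] by (meson order_trans)
  qed
  have Z3: "\<And>t. snorm (matpow M t) \<le> zeta \<epsilon>3 M * (1/a + \<epsilon>3) ^ t"
    using zeta_bound(1)[OF q3 B3'] r3 by simp
  have Z2: "\<And>t. snorm (matpow N2 t) \<le> zeta \<epsilon>2 N2 * (b + \<epsilon>2) ^ t"
    using zeta_bound(1)[OF q2 B4'] r2 by simp
  have Z3p: "1 \<le> zeta \<epsilon>3 M" by (rule zeta_bound(2)[OF q3 B3'])
  have Z2p: "1 \<le> zeta \<epsilon>2 N2" by (rule zeta_bound(2)[OF q2 B4'])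
  have s1: "1 \<le> snorm R2"
  proof -
    obtain j :: 's where True by blast
    let ?e = "axis j (1::real)"
    have "R2 *v (Q2 *v ?e) = ?e" by (simp add: matrix_vector_mul_assoc R22)
    then have "norm ?e \<le> snorm R2 * norm (Q2 *v ?e)" using snorm_bound[of R2 "Q2 *v ?e"] by simp
    then show ?thesis by (simp add: isometry[OF Q2_orth])
  qed
  define \<beta> where "\<beta> = a / ((1 + \<epsilon>3 * a) * (b + \<epsilon>2))"
  define C where "C = 1 / ((1 + 1/\<gamma>) * zeta \<epsilon>3 M * zeta \<epsilon>2 N2 * snorm R2)"
  have Cpos: "0 < C"
  proof -
    have "0 < (1 + 1/\<gamma>) * zeta \<epsilon>3 M * zeta \<epsilon>2 N2 * snorm R2"
      using Z3p Z2p s1 \<gamma>_pos by (intro mult_pos_pos add_pos_pos) auto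
    then show ?thesis unfolding C_def by simp
  qed
  have main: "\<And>\<omega>. norm (R1 *v (matpow A \<omega> *v x)) > (C * \<beta> ^ \<omega>) * norm (R2 *v (matpow A \<omega> *v x))"
  proof -
    fix \<omega>
    define p where "p = R1 *v x"
    define q where "q = R2 *v x"
    have e1: "R1 *v (matpow A \<omega> *v x) = matpow N1 \<omega> *v p"
      by (simp add: p_def matrix_vector_mul_assoc matpow_comm2[OF R1A])
    have e2: "R2 *v (matpow A \<omega> *v x) = matpow N2 \<omega> *v q"
      by (simp add: q_def matrix_vector_mul_assoc matpow_comm2[OF R2A])
    define D where "D = (1/a + \<epsilon>3) ^ \<omega>"
    define E where "E = (b + \<epsilon>2) ^ \<omega>"
    have Dp: "0 < D" unfolding D_def using ia \<epsilon>3_pos by (intro zero_less_power) linarith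
    have Ep: "0 < E" unfolding E_def using b0 \<epsilon>2_pos by (intro zero_less_power) linarith
    have BDE: "\<beta> ^ \<omega> * D * E = 1"
    proof -
      have u: "0 < 1 + \<epsilon>3 * a" using apos \<epsilon>3_pos by (simp add: add_pos_pos)
      have vv: "0 < b + \<epsilon>2" using b0 \<epsilon>2_pos by linarith
      have ee: "1/a + \<epsilon>3 = (1 + \<epsilon>3 * a) / a" using apos by (simp add: field_simps)
      have "\<beta> * (1/a + \<epsilon>3) * (b + \<epsilon>2) = 1"
        unfolding \<beta>_def ee by (rule beta_id[OF apos u vv])
      then have "(\<beta> * (1/a + \<epsilon>3) * (b + \<epsilon>2)) ^ \<omega> = 1" by simp
      then show ?thesis unfolding D_def E_def by (simp add: power_mult_distrib)
    qed
    have hP: "norm p \<le> zeta \<epsilon>3 M * D * norm (matpow N1 \<omega> *v p)"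
    proof -
      have pe: "matpow M \<omega> *v (matpow N1 \<omega> *v p) = p"
        by (simp add: matrix_vector_mul_assoc matpow_inv[OF MN])
      have "norm p \<le> snorm (matpow M \<omega>) * norm (matpow N1 \<omega> *v p)"
        using snorm_bound[of "matpow M \<omega>" "matpow N1 \<omega> *v p"] by (simp only: pe)
      also have "\<dots> \<le> zeta \<epsilon>3 M * D * norm (matpow N1 \<omega> *v p)"
        unfolding D_def by (rule mult_right_mono[OF Z3]) simp
      finally show ?thesis .
    qed
    have hR: "norm (matpow N2 \<omega> *v q) \<le> zeta \<epsilon>2 N2 * E * norm q"
    proof -
      have "norm (matpow N2 \<omega> *v q) \<le> snorm (matpow N2 \<omega>) * norm q" by (rule snorm_bound)
      also have "\<dots> \<le> zeta \<epsilon>2 N2 * E * norm q" unfolding E_def by (rule mult_right_mono[OF Z2]) simp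
      finally show ?thesis .
    qed
    have hx': "norm p > \<gamma> * norm q" using hx by (simp add: p_def q_def)
    have z3p: "0 < zeta \<epsilon>3 M" and z2p: "0 < zeta \<epsilon>2 N2" using Z3p Z2p by linarith+
    have "norm (matpow N1 \<omega> *v p) > (1 / ((1 + 1/\<gamma>) * zeta \<epsilon>3 M * zeta \<epsilon>2 N2 * snorm R2) * \<beta> ^ \<omega>) * norm (matpow N2 \<omega> *v q)"
      by (rule arith_main[OF z3p z2p s1 Dp Ep \<gamma>_pos BDE hP hR hx' norm_ge_zero])
    then show "norm (R1 *v (matpow A \<omega> *v x)) > (C * \<beta> ^ \<omega>) * norm (R2 *v (matpow A \<omega> *v x))"
      unfolding e1 e2 C_def .
  qed
  have bdef: "cmod (lam k) / ((1 + \<epsilon>3 * cmod (lam k)) * (cmod (lam (Suc k)) + \<epsilon>2)) = \<beta>"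
    by (simp add: \<beta>_def a_def b_def)
  have Cdef: "1 / ((1 + 1/\<gamma>) * zeta \<epsilon>3 (matrix_inv N1) * zeta \<epsilon>2 N2 * snorm R2) = C"
    by (simp add: C_def M_def)
  show ?thesis unfolding bdef Cdef
  proof (intro conjI impI allI)
    fix \<omega> :: nat
    show "norm (R1 *v (matpow A \<omega> *v x)) > (C * \<beta> ^ \<omega>) * norm (R2 *v (matpow A \<omega> *v x))"
      by (rule main)
  next
    assume b1: "1 < \<beta>"
    have lb: "0 < ln \<beta>" using b1 by simp
    have bpos: "0 < \<beta>" using b1 by simp
    define w0 where "w0 g = nat \<lceil>ln (g / C) / ln \<beta>\<rceil>" for g :: real
    show "\<exists>\<omega>0 :: real \<Rightarrow> nat.
           (\<lambda>g. real (\<omega>0 g)) \<in> O(\<lambda>g. ln (g / \<gamma>)) \<and>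
           (\<forall>\<gamma>p>0. \<forall>\<omega>. \<omega> > \<omega>0 \<gamma>p \<longrightarrow>
              norm (R1 *v (matpow A \<omega> *v x)) > \<gamma>p * norm (R2 *v (matpow A \<omega> *v x)))"
    proof (rule exI[of _ w0], intro conjI allI impI)
      define T where "T = max (2 * ln \<gamma> - ln C + ln \<beta>) (ln \<gamma>)"
      have ev: "eventually (\<lambda>g. norm (real (w0 g)) \<le> (2 / ln \<beta>) * norm (ln (g / \<gamma>))) at_top"
        using eventually_ge_at_top[of "exp T"]
      proof eventually_elim
        case (elim g)
        have gpos: "0 < g" using elim by (metis exp_gt_zero less_le_trans)
        have lg: "T \<le> ln g" using elim gpos by (metis exp_gt_zero ln_exp ln_le_cancel_iff)
        have l1: "ln (g / C) = ln g - ln C" using gpos Cpos by (simp add: ln_div)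
        have l2: "ln (g / \<gamma>) = ln g - ln \<gamma>" using gpos \<gamma>_pos by (simp add: ln_div)
        have T1: "2 * ln \<gamma> - ln C + ln \<beta> \<le> T" and T2: "ln \<gamma> \<le> T" unfolding T_def by simp_all
        have nn: "0 \<le> ln g - ln \<gamma>" using lg T2 by linarith
        have y: "real (w0 g) \<le> max 0 ((ln g - ln C) / ln \<beta> + 1)" unfolding w0_def l1 by (rule nat_ceil_le)
        have X: "(ln g - ln C) / ln \<beta> + 1 \<le> (2 / ln \<beta>) * (ln g - ln \<gamma>)"
        proof -
          have h: "ln g - ln C + ln \<beta> \<le> 2 * (ln g - ln \<gamma>)"
          proof -
            have "2 * ln \<gamma> - ln C + ln \<beta> \<le> ln g" using lg T1 by (rule order_trans[rotated])
            then show ?thesis by (simp add: algebra_simps)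
          qed
          have "(ln g - ln C) / ln \<beta> + 1 = (ln g - ln C + ln \<beta>) / ln \<beta>" using lb by (simp add: field_simps)
          also have "\<dots> \<le> (2 * (ln g - ln \<gamma>)) / ln \<beta>" by (rule divide_right_mono[OF h]) (use lb in simp)
          also have "\<dots> = (2 / ln \<beta>) * (ln g - ln \<gamma>)" by simp
          finally show ?thesis .
        qed
        have Y: "0 \<le> (2 / ln \<beta>) * (ln g - ln \<gamma>)" using lb nn by simp
        have "max 0 ((ln g - ln C) / ln \<beta> + 1) \<le> (2 / ln \<beta>) * (ln g - ln \<gamma>)"
          using X Y by (rule max.boundedI[rotated])
        then have "real (w0 g) \<le> (2 / ln \<beta>) * (ln g - ln \<gamma>)" using y by linarith
        then show ?case using nn by (simp add: l2)
      qed
      show "(\<lambda>g. real (w0 g)) \<in> O(\<lambda>g. ln (g / \<gamma>))" by (rule bigoI[OF ev])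
    next
      fix gp :: real and \<omega> :: nat
      assume gp: "gp > 0" and om: "w0 gp < \<omega>"
      let ?y = "ln (gp / C) / ln \<beta>"
      have "?y \<le> of_int \<lceil>?y\<rceil>" by (rule le_of_int_ceiling)
      also have "\<dots> \<le> real (nat \<lceil>?y\<rceil>)" by (cases "0 \<le> \<lceil>?y\<rceil>") auto
      also have "\<dots> \<le> real \<omega>" using om[unfolded w0_def] by (intro of_nat_mono less_imp_le)
      finally have "?y \<le> real \<omega>" .
      then have "ln (gp / C) \<le> real \<omega> * ln \<beta>" using lb by (simp add: divide_le_eq)
      also have "\<dots> = ln (\<beta> ^ \<omega>)" by (simp add: ln_realpow)
      finally have "gp / C \<le> \<beta> ^ \<omega>" using gp Cpos bpos by simp
      then have "gp \<le> C * \<beta> ^ \<omega>" using Cpos by (simp add: divide_le_eq mult.commute)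
      then have "gp * norm (R2 *v (matpow A \<omega> *v x)) \<le> (C * \<beta> ^ \<omega>) * norm (R2 *v (matpow A \<omega> *v x))"
        by (rule mult_right_mono) simp
      also have "\<dots> < norm (R1 *v (matpow A \<omega> *v x))" by (rule main)
      finally show "norm (R1 *v (matpow A \<omega> *v x)) > gp * norm (R2 *v (matpow A \<omega> *v x))" .
    qed
  qed
qed
end
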